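(* Consider the following two-player game with parameters $N\ge 1$ (number of bins), a positive integer $b\ge 1$, and thresholds $k>k'\ge 0$. Initially there are $N$ bins, each containing at most $k'$ balls. In each round, first Player I removes a bin of largest size (number of balls) among the remaining bins, and then Player II adds balls to the remaining bins, at most $b$ balls in total in that round, distributed arbitrarily. Player II wins if at some moment some remaining bin contains $k$ balls; Player I wins if all bins are removed before this happens. If $b<\frac{k-k'}{\ln N+1}$, then Player I wins against every strategy of Player II. *)

theory Defs
  imports Complex_Main
begin

text \<open>A play of the bins game, as a sequence of positions indexed by rounds t = 0..N.
  S t is the set of remaining bins (bins are 0..N-1) before round t+1,
  L t i is the number of balls in bin i at that time.\<close>

definition bins_round ::
  "nat \<Rightarrow> nat set \<Rightarrow> (nat \<Rightarrow> nat) \<Rightarrow> nat set \<Rightarrow> (nat \<Rightarrow> nat) \<Rightarrow> bool" where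
  "bins_round b S L S' L' \<longleftrightarrow>
     (\<exists>r \<in> S. (\<forall>j \<in> S. L j \<le> L r) \<and> S' = S - {r}
        \<and> (\<forall>i \<in> S'. L i \<le> L' i)
        \<and> (\<Sum>i\<in>S'. (L' i - L i)) \<le> b)"

definition bins_play ::
  "nat \<Rightarrow> nat \<Rightarrow> nat \<Rightarrow> (nat \<Rightarrow> nat set) \<Rightarrow> (nat \<Rightarrow> nat \<Rightarrow> nat) \<Rightarrow> bool" where
  "bins_play N k' b S L \<longleftrightarrow>
     S 0 = {..<N} \<and> (\<forall>i \<in> S 0. L 0 i \<le> k')
     \<and> (\<forall>t < N. bins_round b (S t) (L t) (S (Suc t)) (L (Suc t)))"

end

theory Submission
  imports Defs "HOL-Analysis.Harmonic_Numbers"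
begin

lemma fin_S:
  assumes play: "bins_play N k' b S L"
  shows "t \<le> N \<Longrightarrow> finite (S t)"
proof (induction t)
  case 0 then show ?case using play by (simp add: bins_play_def)
next
  case (Suc t)
  then have "t < N" by simp
  then have "bins_round b (S t) (L t) (S (Suc t)) (L (Suc t))" using play by (simp add: bins_play_def)
  then obtain r where "S (Suc t) = S t - {r}" by (auto simp: bins_round_def)
  with Suc show ?case by simp
qed

lemma key:
  assumes play: "bins_play N k' b S L"
  shows "s + d \<le> N \<Longrightarrow> i \<in> S (s+d) \<Longrightarrow> \<exists>W. W \<subseteq> S s \<and> finite W \<and> card W = Suc d \<and>
     real (L (s+d) i) \<le> (\<Sum>j\<in>W. real (L s j)) / real (Suc d) + real b * harm d"
proof (induction d arbitrary: s)
  case 0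
  then show ?case by (intro exI[of _ "{i}"]) (auto simp: harm_def)
next
  case (Suc d)
  have "Suc s + d \<le> N" "i \<in> S (Suc s + d)" using Suc.prems by auto
  from Suc.IH[OF this] obtain W where W: "W \<subseteq> S (Suc s)" "finite W" "card W = Suc d"
    and ih: "real (L (Suc s + d) i) \<le> (\<Sum>j\<in>W. real (L (Suc s) j)) / real (Suc d) + real b * harm d"
    by blast
  have "s < N" using Suc.prems by simp
  then have "bins_round b (S s) (L s) (S (Suc s)) (L (Suc s))" using play by (simp add: bins_play_def)
  then obtain r where r: "r \<in> S s" "\<forall>j \<in> S s. L s j \<le> L s r" "S (Suc s) = S s - {r}"
    "\<forall>j \<in> S (Suc s). L s j \<le> L (Suc s) j" "(\<Sum>j\<in>S (Suc s). (L (Suc s) j - L s j)) \<le> b"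
    by (auto simp: bins_round_def)
  have finS: "finite (S (Suc s))" using fin_S[OF play, of "Suc s"] \<open>s < N\<close> by simp
  define A where "A = (\<Sum>j\<in>W. L s j)"
  have "(\<Sum>j\<in>W. L (Suc s) j) = (\<Sum>j\<in>W. L s j + (L (Suc s) j - L s j))"
    proof (rule sum.cong)
    fix x assume "x \<in> W"
    then have "L s x \<le> L (Suc s) x" using W(1) r(4) by blast
    then show "L (Suc s) x = L s x + (L (Suc s) x - L s x)" by simp
  qed simp
  also have "\<dots> = A + (\<Sum>j\<in>W. (L (Suc s) j - L s j))" by (simp add: sum.distrib A_def)
  also have "(\<Sum>j\<in>W. (L (Suc s) j - L s j)) \<le> (\<Sum>j\<in>S (Suc s). (L (Suc s) j - L s j))"
    by (rule sum_mono2[OF finS W(1)]) auto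
  finally have A'le: "(\<Sum>j\<in>W. L (Suc s) j) \<le> A + b" using r(5) by linarith
  have Ale: "A \<le> Suc d * L s r"
    unfolding A_def using sum_bounded_above[of W "\<lambda>j. L s j" "L s r"] W r by auto
  have rW: "r \<notin> W" using W r by auto
  define W' where "W' = insert r W"
  have W': "W' \<subseteq> S s" "finite W'" "card W' = Suc (Suc d)" using W r rW by (auto simp: W'_def)
  have sW': "(\<Sum>j\<in>W'. real (L s j)) = real (L s r) + real A"
    using W rW by (simp add: W'_def A_def)
  have e1: "(\<Sum>j\<in>W. real (L (Suc s) j)) \<le> real A + real b"
  proof -
    have "real (\<Sum>j\<in>W. L (Suc s) j) \<le> real (A + b)" using A'le by (simp only: of_nat_le_iff)
    then show ?thesis by simp
  qed
  have e2: "real A \<le> real (Suc d) * real (L s r)" proof -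
    have "real A \<le> real (Suc d * L s r)" using Ale by (simp only: of_nat_le_iff)
    then show ?thesis by (simp only: of_nat_mult)
  qed
  have e3: "real A / real (Suc d) \<le> (real (L s r) + real A) / real (Suc (Suc d))"
    using e2 by (simp add: field_simps)
  have "real (L (s + Suc d) i) \<le> (real A + real b) / real (Suc d) + real b * harm d"
  proof -
    have "(\<Sum>j\<in>W. real (L (Suc s) j)) / real (Suc d) \<le> (real A + real b) / real (Suc d)"
      using e1 by (intro divide_right_mono) auto
    then show ?thesis using ih by simp
  qed
  also have "\<dots> = real A / real (Suc d) + real b * harm (Suc d)"
    by (simp only: harm_Suc add_divide_distrib distrib_left divide_inverse mult_1_right add_ac distrib_right)
  also have "\<dots> \<le> (\<Sum>j\<in>W'. real (L s j)) / real (Suc (Suc d)) + real b * harm (Suc d)"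
    using e3 sW' by simp
  finally have ineq: "real (L (s + Suc d) i) \<le> (\<Sum>j\<in>W'. real (L s j)) / real (Suc (Suc d)) + real b * harm (Suc d)" .
  show ?case by (rule exI[of _ W']) (use W' ineq in simp)
qed

theorem mainTheorem6:
  fixes N b k k' :: nat and S :: "nat \<Rightarrow> nat set" and L :: "nat \<Rightarrow> nat \<Rightarrow> nat"
  assumes "N \<ge> 1" and "b \<ge> 1" and "k > k'"
    and "real b < (real k - real k') / (ln (real N) + 1)"
    and "bins_play N k' b S L"
  shows "\<forall>t \<le> N. \<forall>i \<in> S t. L t i < k"
proof (intro allI impI ballI)
  fix t i assume t: "t \<le> N" and i: "i \<in> S t"
  from key[OF assms(5), of 0 t i] t i obtain W where W: "W \<subseteq> S 0" "finite W" "card W = Suc t"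
    and le: "real (L t i) \<le> (\<Sum>j\<in>W. real (L 0 j)) / real (Suc t) + real b * harm t" by auto
  have S0: "S 0 = {..<N}" "\<forall>i \<in> S 0. L 0 i \<le> k'" using assms(5) by (auto simp: bins_play_def)
  have "card W \<le> N" using card_mono[of "{..<N}" W] W S0 by auto
  then have tN: "t < N" using W by simp
  have "(\<Sum>j\<in>W. real (L 0 j)) \<le> real (card W) * real k'"
    using sum_bounded_above[of W "\<lambda>j. real (L 0 j)" "real k'"] W S0 by auto
  then have avg: "(\<Sum>j\<in>W. real (L 0 j)) / real (Suc t) \<le> real k'"
    using W by (simp add: field_simps)
  have "harm t \<le> (harm N :: real)" using tN by (intro harm_mono) simp
  also have "harm N \<le> ln (real N) + (1::real)"
  proof -
    obtain m where m: "N = Suc m" using assms(1) by (cases N) auto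
    have "harm (Suc m) - ln (real (Suc m)) \<le> harm (Suc 0) - ln (real (Suc 0))"
      using decseq_harm_diff_ln[unfolded decseq_def, rule_format, of 0 m] by simp
    then show ?thesis using m by (simp add: harm_Suc harm_def)
  qed
  finally have h: "harm t \<le> ln (real N) + 1" .
  have lnpos: "ln (real N) + 1 > 0" proof -
    have "real N \<ge> 1" using assms(1) by simp
    then have "ln (real N) \<ge> 0" by (rule ln_ge_zero)
    then show ?thesis by linarith
  qed
  have "real b * (ln (real N) + 1) < real k - real k'" using assms(4) lnpos by (simp add: field_simps)
  moreover have "real b * harm t \<le> real b * (ln (real N) + 1)" using h by (simp add: mult_left_mono)
  ultimately have "real (L t i) < real k" using le avg by linarith
  then show "L t i < k" by simp
qed

end
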